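(* Let $x$ be an allocation rule and suppose Assumptions D and X hold. (The following is part (ii) of the proposition; part (i) is attributed to prior work.) Suppose $\bar t$ is a win-lose dependent transfer rule (for $x$) such that for every $i$ and $\theta\in\Theta$, $$\bar U_i^{\min}(\theta)=\int_{\underline\theta}^{\theta}X_i^{\min}(z)\,dz,$$ where $\bar U_i^{\min}$ denotes the interim worst-case utility under $(x,\bar t)$. Then $(x,\bar t)$ is feasible.
   Context: Let $\Theta=[\underline\theta,\bar\theta]\subset\mathbb{R}$ with $0<\underline\theta<\bar\theta$, with Borel $\sigma$-algebra $\mathcal{B}$; "$\sigma$-algebra" always means a sub-$\sigma$-algebra of $\mathcal{B}$, and $\Delta(\Theta,\mathcal{A})$ is the set of probability measures on $(\Theta,\mathcal{A})$; $P_{\mathcal{E}}$ denotes the restriction of $P$ to $\mathcal{E}$. A divergence $D$ assigns to each pair $Q,P$ of probability measures on a common $\sigma$-algebra a number $D(Q\|P)\in[0,\infty]$. Assumption D: for every $\sigma$-algebra $\mathcal{A}$ and $P,Q\in\Delta(\Theta,\mathcal{A})$: (D1) $D(Q\|P)=0$ if $Q=P$; (D2) if $Q\ll P$ and $dQ/dP$ is bounded, $\epsilon\mapsto D(\epsilon Q+(1-\epsilon)P\|P)$ is continuous on $[0,1]$; (D3) $D(Q\|P)<\infty$ implies $Q\ll P$; (D4) $D(Q_{\mathcal{E}}\|P_{\mathcal{E}})\le D(Q\|P)$ for every sub-$\sigma$-algebra $\mathcal{E}\subset\mathcal{A}$; (D5) $D(Q_{\mathcal{E}}\|P_{\mathcal{E}})=D(Q\|P)$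 if $dQ_{\mathcal{E}}/dP_{\mathcal{E}}=dQ/dP$ $P$-a.e. Fix an atomless $P\in\Delta(\Theta,\mathcal{B})$ and $\eta>0$. Two bidders $i\in\{1,2\}$. An allocation rule is a bounded measurable $x=(x_1,x_2):\Theta^2\to\mathbb{R}^2$ with $x_1(\theta,\theta')\ge0$, $x_2(\theta',\theta)\ge0$, $x_1(\theta,\theta')+x_2(\theta',\theta)\le1$; a transfer rule is a bounded measurable $t=(t_1,t_2):\Theta^2\to\mathbb{R}^2$. Define $X_i(\theta)=\int x_i(\theta,\theta')dP(\theta')$, $X_i^{\min}(\theta)=\inf_Q\{\int x_i(\theta,\theta')dQ(\theta'):D(Q\|P)\le\eta\}$, and for a transfer rule $t$, $U_i^{\min}(\theta)=\inf_Q\{\int[\theta x_i(\theta,\theta')-t_i(\theta,\theta')]dQ(\theta'):D(Q\|P)\le\eta\}$, $Q$ ranging over $\Delta(\Theta,\mathcal{B})$. $(x,t)$ is incentive compatible if for all $i,\theta$, $\theta\in\arg\max_{\hat\theta\in\Theta}\inf_Q\{\int[\theta x_i(\hat\theta,\theta')-t_i(\hat\theta,\theta')]dQ(\theta'):D(Q\|P)\le\eta\}$; individually rational if $U_i^{\min}(\theta)\ge0$ for all $i,\theta$; feasible if both. Assumption X: (i) $x_i(\theta,\theta')\in\{0,1\}$ for $\theta'\ne\theta$; (ii) $X_i(\theta)=1$ implies $\theta=\bar\theta$; (iii) $X_i^{\min}$ is non-decreasing. A transfer rule $t$ is win-lose dependent if there exist $t_i^w,t_i^l:\Theta\to\mathbb{R}$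 with $t_i(\theta,\theta')=t_i^w(\theta)x_i(\theta,\theta')+t_i^l(\theta)[1-x_i(\theta,\theta')]$ and $\theta-t_i^w(\theta)\ge-t_i^l(\theta)$ for all $i,\theta,\theta'$. *)

theory Defs
  imports "HOL-Probability.Probability"
begin

definition BTheta :: "real \<Rightarrow> real \<Rightarrow> real set set" where
  "BTheta lo hi = sets (restrict_space borel {lo..hi})"

(* a sigma-algebra in the paper's sense: a sub-sigma-algebra of the Borel sets of Theta *)
definition sub_borel :: "real \<Rightarrow> real \<Rightarrow> real set set \<Rightarrow> bool" where
  "sub_borel lo hi F \<longleftrightarrow> sigma_algebra {lo..hi} F \<and> F \<subseteq> BTheta lo hi"

definition prob_on :: "real \<Rightarrow> real \<Rightarrow> real set set \<Rightarrow> real measure \<Rightarrow> bool" where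
  "prob_on lo hi F M \<longleftrightarrow> prob_space M \<and> space M = {lo..hi} \<and> sets M = F"

definition restr :: "real measure \<Rightarrow> real set set \<Rightarrow> real measure" where
  "restr M E = measure_of (space M) E (emeasure M)"

definition mix :: "real \<Rightarrow> real measure \<Rightarrow> real measure \<Rightarrow> real measure" where
  "mix e Q P = measure_of (space P) (sets P)
      (\<lambda>A. ennreal e * emeasure Q A + ennreal (1 - e) * emeasure P A)"

definition assumption_D :: "real \<Rightarrow> real \<Rightarrow> (real measure \<Rightarrow> real measure \<Rightarrow> ennreal) \<Rightarrow> bool" where
  "assumption_D lo hi D \<longleftrightarrow>
    (\<forall>A P Q. sub_borel lo hi A \<longrightarrow> prob_on lo hi A P \<longrightarrow> prob_on lo hi A Q \<longrightarrow>
      (Q = P \<longrightarrow> D Q P = 0) \<and>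
      ((absolutely_continuous P Q \<and> (\<exists>B::real. AE w in P. RN_deriv P Q w \<le> ennreal B))
         \<longrightarrow> continuous_on {0..1} (\<lambda>e. D (mix e Q P) P)) \<and>
      (D Q P < \<infinity> \<longrightarrow> absolutely_continuous P Q) \<and>
      (\<forall>E. sub_borel lo hi E \<longrightarrow> E \<subseteq> A \<longrightarrow> D (restr Q E) (restr P E) \<le> D Q P) \<and>
      (\<forall>E. sub_borel lo hi E \<longrightarrow> E \<subseteq> A \<longrightarrow> absolutely_continuous P Q \<longrightarrow>
          (AE w in P. RN_deriv (restr P E) (restr Q E) w = RN_deriv P Q w) \<longrightarrow>
          D (restr Q E) (restr P E) = D Q P))"

definition bdd_meas2 :: "real \<Rightarrow> real \<Rightarrow> (real \<Rightarrow> real \<Rightarrow> real) \<Rightarrow> bool" where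
  "bdd_meas2 lo hi f \<longleftrightarrow>
     (\<lambda>(a, b). f a b) \<in> borel_measurable (restrict_space borel {lo..hi} \<Otimes>\<^sub>M restrict_space borel {lo..hi})
     \<and> (\<exists>B. \<forall>a\<in>{lo..hi}. \<forall>b\<in>{lo..hi}. \<bar>f a b\<bar> \<le> B)"

(* allocation rule for bidders 1,2; x i \<theta> \<theta>' = x_i(own type, other's type) *)
definition allocation_rule :: "real \<Rightarrow> real \<Rightarrow> (nat \<Rightarrow> real \<Rightarrow> real \<Rightarrow> real) \<Rightarrow> bool" where
  "allocation_rule lo hi x \<longleftrightarrow>
     (\<forall>i\<in>{1,2}. bdd_meas2 lo hi (x i)) \<and>
     (\<forall>a\<in>{lo..hi}. \<forall>b\<in>{lo..hi}. x 1 a b \<ge> 0 \<and> x 2 b a \<ge> 0 \<and> x 1 a b + x 2 b a \<le> 1)"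

definition transfer_rule :: "real \<Rightarrow> real \<Rightarrow> (nat \<Rightarrow> real \<Rightarrow> real \<Rightarrow> real) \<Rightarrow> bool" where
  "transfer_rule lo hi t \<longleftrightarrow> (\<forall>i\<in>{1,2}. bdd_meas2 lo hi (t i))"

definition amb :: "real \<Rightarrow> real \<Rightarrow> (real measure \<Rightarrow> real measure \<Rightarrow> ennreal) \<Rightarrow> real measure \<Rightarrow> real \<Rightarrow> real measure set" where
  "amb lo hi D P \<eta> = {Q. prob_on lo hi (BTheta lo hi) Q \<and> D Q P \<le> ennreal \<eta>}"

definition Xint :: "real measure \<Rightarrow> (nat \<Rightarrow> real \<Rightarrow> real \<Rightarrow> real) \<Rightarrow> nat \<Rightarrow> real \<Rightarrow> real" where
  "Xint P x i \<theta> = (\<integral>\<theta>'. x i \<theta> \<theta>' \<partial>P)"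

definition Xmin :: "real \<Rightarrow> real \<Rightarrow> (real measure \<Rightarrow> real measure \<Rightarrow> ennreal) \<Rightarrow> real measure \<Rightarrow> real
     \<Rightarrow> (nat \<Rightarrow> real \<Rightarrow> real \<Rightarrow> real) \<Rightarrow> nat \<Rightarrow> real \<Rightarrow> real" where
  "Xmin lo hi D P \<eta> x i \<theta> = (INF Q \<in> amb lo hi D P \<eta>. (\<integral>\<theta>'. x i \<theta> \<theta>' \<partial>Q))"

(* worst-case utility of type \<theta> reporting \<theta>h *)
definition Vmin :: "real \<Rightarrow> real \<Rightarrow> (real measure \<Rightarrow> real measure \<Rightarrow> ennreal) \<Rightarrow> real measure \<Rightarrow> real
     \<Rightarrow> (nat \<Rightarrow> real \<Rightarrow> real \<Rightarrow> real) \<Rightarrow> (nat \<Rightarrow> real \<Rightarrow> real \<Rightarrow> real) \<Rightarrow> nat \<Rightarrow> real \<Rightarrow> real \<Rightarrow> real" where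
  "Vmin lo hi D P \<eta> x t i \<theta> \<theta>h =
     (INF Q \<in> amb lo hi D P \<eta>. (\<integral>\<theta>'. \<theta> * x i \<theta>h \<theta>' - t i \<theta>h \<theta>' \<partial>Q))"

definition Umin :: "real \<Rightarrow> real \<Rightarrow> (real measure \<Rightarrow> real measure \<Rightarrow> ennreal) \<Rightarrow> real measure \<Rightarrow> real
     \<Rightarrow> (nat \<Rightarrow> real \<Rightarrow> real \<Rightarrow> real) \<Rightarrow> (nat \<Rightarrow> real \<Rightarrow> real \<Rightarrow> real) \<Rightarrow> nat \<Rightarrow> real \<Rightarrow> real" where
  "Umin lo hi D P \<eta> x t i \<theta> =
     (INF Q \<in> amb lo hi D P \<eta>. (\<integral>\<theta>'. \<theta> * x i \<theta> \<theta>' - t i \<theta> \<theta>' \<partial>Q))"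

definition incentive_compatible where
  "incentive_compatible lo hi D P \<eta> x t \<longleftrightarrow>
     (\<forall>i\<in>{1,2::nat}. \<forall>\<theta>\<in>{lo..hi}. \<forall>\<theta>h\<in>{lo..hi}.
        Vmin lo hi D P \<eta> x t i \<theta> \<theta>h \<le> Vmin lo hi D P \<eta> x t i \<theta> \<theta>)"

definition individually_rational where
  "individually_rational lo hi D P \<eta> x t \<longleftrightarrow>
     (\<forall>i\<in>{1,2::nat}. \<forall>\<theta>\<in>{lo..hi}. Umin lo hi D P \<eta> x t i \<theta> \<ge> 0)"

definition feasible where
  "feasible lo hi D P \<eta> x t \<longleftrightarrow>
     incentive_compatible lo hi D P \<eta> x t \<and> individually_rational lo hi D P \<eta> x t"

definition assumption_X where
  "assumption_X lo hi D P \<eta> x \<longleftrightarrow>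
     (\<forall>i\<in>{1,2::nat}.
        (\<forall>\<theta>\<in>{lo..hi}. \<forall>\<theta>'\<in>{lo..hi}. \<theta>' \<noteq> \<theta> \<longrightarrow> x i \<theta> \<theta>' \<in> {0, 1}) \<and>
        (\<forall>\<theta>\<in>{lo..hi}. Xint P x i \<theta> = 1 \<longrightarrow> \<theta> = hi) \<and>
        mono_on {lo..hi} (Xmin lo hi D P \<eta> x i))"

definition win_lose_dependent where
  "win_lose_dependent lo hi x t \<longleftrightarrow>
     (\<exists>tw tl :: nat \<Rightarrow> real \<Rightarrow> real. \<forall>i\<in>{1,2::nat}. \<forall>\<theta>\<in>{lo..hi}. \<forall>\<theta>'\<in>{lo..hi}.
        t i \<theta> \<theta>' = tw i \<theta> * x i \<theta> \<theta>' + tl i \<theta> * (1 - x i \<theta> \<theta>') \<and>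
        \<theta> - tw i \<theta> \<ge> - tl i \<theta>)"

end

theory Submission imports Defs begin

lemma inf_affine:
  fixes S :: "real set"
  assumes "S \<noteq> {}" "S \<subseteq> {0..B}"
  shows "Inf ((\<lambda>u. m*u + k) ` S) \<le> m * Inf S + k"
    and "m \<ge> 0 \<Longrightarrow> Inf ((\<lambda>u. m*u + k) ` S) = m * Inf S + k"
proof -
  have bS: "bdd_below S" using assms(2) by (auto simp: bdd_below_def intro!: exI[of _ 0])
  have bI: "bdd_below ((\<lambda>u. m*u + k) ` S)"
  proof -
    have "\<forall>u\<in>S. m*u+k \<ge> -(\<bar>m\<bar>*B) + k"
    proof
      fix u assume "u \<in> S"
      hence "0 \<le> u" "u \<le> B" using assms(2) by auto
      hence "\<bar>m*u\<bar> \<le> \<bar>m\<bar>*B" by (simp add: abs_mult mult_left_mono)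
      thus "m*u+k \<ge> -(\<bar>m\<bar>*B) + k" by linarith
    qed
    thus ?thesis unfolding bdd_below_def by (intro exI[of _ "-(\<bar>m\<bar>*B) + k"]) auto
  qed
  have low: "\<And>u. u \<in> S \<Longrightarrow> Inf ((\<lambda>u. m*u + k) ` S) \<le> m*u + k"
    using bI by (intro cInf_lower) auto
  show A: "Inf ((\<lambda>u. m*u + k) ` S) \<le> m * Inf S + k"
  proof (cases "m > 0")
    case True
    show ?thesis
    proof (rule ccontr)
      assume "\<not> ?thesis"
      hence L: "Inf ((\<lambda>u. m*u + k) ` S) > m * Inf S + k" by simp
      have "\<forall>u\<in>S. u \<ge> (Inf ((\<lambda>u. m*u + k) ` S) - k)/m"
        using True low by (auto simp: field_simps)
      hence "Inf S \<ge> (Inf ((\<lambda>u. m*u + k) ` S) - k)/m"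
        using assms by (intro cInf_greatest) auto
      thus False using L True by (auto simp: field_simps)
    qed
  next
    case False
    obtain u where u: "u \<in> S" using assms by auto
    have "Inf ((\<lambda>u. m*u + k) ` S) \<le> m*u + k" using low u .
    also have "\<dots> \<le> m * Inf S + k"
      using False cInf_lower[OF u bS] by (simp add: mult_left_mono_neg)
    finally show ?thesis .
  qed
  assume m: "m \<ge> 0"
  have "m * Inf S + k \<le> Inf ((\<lambda>u. m*u + k) ` S)"
    using assms(1) by (intro cInf_greatest) (auto intro!: mult_left_mono cInf_lower bS m)
  with A show "Inf ((\<lambda>u. m*u + k) ` S) = m * Inf S + k" by linarith
qed

lemma sub_borel_BTheta: "sub_borel lo hi (BTheta lo hi)"
  unfolding sub_borel_def BTheta_def
  using sets.sigma_algebra_axioms[of "restrict_space borel {lo..hi}"]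
  by (simp add: sigma_algebra_def)


theorem proposition1:
  fixes lo hi \<eta> :: real and P :: "real measure"
    and D :: "real measure \<Rightarrow> real measure \<Rightarrow> ennreal"
    and x t :: "nat \<Rightarrow> real \<Rightarrow> real \<Rightarrow> real"
  assumes "0 < lo" and "lo < hi" and "0 < \<eta>"
    and "prob_on lo hi (BTheta lo hi) P"
    and "\<forall>a. emeasure P {a} = 0"
    and "assumption_D lo hi D"
    and "allocation_rule lo hi x"
    and "assumption_X lo hi D P \<eta> x"
    and "transfer_rule lo hi t"
    and "win_lose_dependent lo hi x t"
    and "\<forall>i\<in>{1,2}. \<forall>\<theta>\<in>{lo..hi}.
           Umin lo hi D P \<eta> x t i \<theta> = integral {lo..\<theta>} (Xmin lo hi D P \<eta> x i)"
  shows "feasible lo hi D P \<eta> x t"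
proof -
  define A where "A = amb lo hi D P \<eta>"
  have DPP: "D P P = 0"
    using assms(6,4) sub_borel_BTheta[of lo hi] unfolding assumption_D_def by blast
  have PA: "P \<in> A" unfolding A_def amb_def using assms(4) assms(3) DPP by simp
  have QA: "prob_space Q \<and> space Q = {lo..hi} \<and> sets Q = sets (restrict_space borel {lo..hi})"
    if "Q \<in> A" for Q
    using that unfolding A_def amb_def prob_on_def BTheta_def by auto
  obtain tw tl where wl: "\<And>i \<theta> \<theta>'. i \<in> {1,2} \<Longrightarrow> \<theta> \<in> {lo..hi} \<Longrightarrow> \<theta>' \<in> {lo..hi} \<Longrightarrow>
        t i \<theta> \<theta>' = tw i \<theta> * x i \<theta> \<theta>' + tl i \<theta> * (1 - x i \<theta> \<theta>') \<and> \<theta> - tw i \<theta> \<ge> - tl i \<theta>"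
    using assms(10) unfolding win_lose_dependent_def by metis
  have x01: "0 \<le> x i a b \<and> x i a b \<le> 1" if "i \<in> {1,2}" "a \<in> {lo..hi}" "b \<in> {lo..hi}" for i a b
  proof -
    have "0 \<le> x 1 a b \<and> 0 \<le> x 2 b a \<and> x 1 a b + x 2 b a \<le> 1"
         "0 \<le> x 1 b a \<and> 0 \<le> x 2 a b \<and> x 1 b a + x 2 a b \<le> 1"
      using assms(7) that unfolding allocation_rule_def by auto
    thus ?thesis using that by auto
  qed
  have xmeas: "x i a \<in> borel_measurable (restrict_space borel {lo..hi})"
    if "i \<in> {1,2}" "a \<in> {lo..hi}" for i a
  proof -
    have "(\<lambda>(a, b). x i a b) \<in> borel_measurable (restrict_space borel {lo..hi} \<Otimes>\<^sub>M restrict_space borel {lo..hi})"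
      using assms(7) that unfolding allocation_rule_def bdd_meas2_def by auto
    from measurable_Pair2[OF this, of a] that show ?thesis by simp
  qed
  have xint: "integrable Q (x i a)" if "i \<in> {1,2}" "a \<in> {lo..hi}" "Q \<in> A" for i a Q
  proof -
    have Q: "prob_space Q" "space Q = {lo..hi}" "sets Q = sets (restrict_space borel {lo..hi})"
      using QA[OF that(3)] by auto
    then interpret prob_space Q by simp
    have m: "x i a \<in> borel_measurable Q"
      using xmeas[OF that(1,2)] measurable_cong_sets[OF Q(3) refl, of borel] by metis
    show ?thesis
      by (rule integrable_const_bound[where B=1]) (use x01 that Q(2) m in auto)
  qed
  have xrange: "(\<integral>b. x i a b \<partial>Q) \<in> {0..1}" if "i \<in> {1,2}" "a \<in> {lo..hi}" "Q \<in> A" for i a Q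
  proof -
    have Q: "prob_space Q" "space Q = {lo..hi}"
      using QA[OF that(3)] by auto
    then interpret prob_space Q by simp
    have "(\<integral>b. x i a b \<partial>Q) \<ge> 0" using x01 that Q(2) by (intro Bochner_Integration.integral_nonneg) auto
    moreover have "(\<integral>b. x i a b \<partial>Q) \<le> (\<integral>b. 1 \<partial>Q)"
      using x01 that Q(2) xint[OF that] by (intro integral_mono) auto
    ultimately show ?thesis using prob_space by simp
  qed
  have lin: "(\<integral>b. th * x i a b - t i a b \<partial>Q) = (th - tw i a + tl i a) * (\<integral>b. x i a b \<partial>Q) + (- tl i a)"
    if "i \<in> {1,2}" "a \<in> {lo..hi}" "Q \<in> A" for i a Q th
  proof -
    have Q: "prob_space Q" "space Q = {lo..hi}"
      using QA[OF that(3)] by auto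
    then interpret prob_space Q by simp
    have "(\<integral>b. th * x i a b - t i a b \<partial>Q) = (\<integral>b. (th - tw i a + tl i a) * x i a b + (- tl i a) \<partial>Q)"
      by (rule Bochner_Integration.integral_cong) (use wl[OF that(1,2)] Q(2) in \<open>auto simp: algebra_simps\<close>)
    also have "\<dots> = (th - tw i a + tl i a) * (\<integral>b. x i a b \<partial>Q) + (- tl i a)"
      using xint[OF that] using prob_space by simp
    finally show ?thesis .
  qed
  define S where "S i a = (\<lambda>Q. (\<integral>b. x i a b \<partial>Q)) ` A" for i a
  have Sne: "S i a \<noteq> {}" for i a using PA unfolding S_def by auto
  have Ssub: "S i a \<subseteq> {0..1}" if "i \<in> {1,2}" "a \<in> {lo..hi}" for i a
    using xrange[OF that] unfolding S_def by auto
  have XS: "Xmin lo hi D P \<eta> x i a = Inf (S i a)" for i a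
    unfolding Xmin_def S_def A_def image_image ..
  have VS: "Vmin lo hi D P \<eta> x t i th a = Inf ((\<lambda>u. (th - tw i a + tl i a) * u + (- tl i a)) ` S i a)"
    if "i \<in> {1,2}" "a \<in> {lo..hi}" for i a th
    unfolding Vmin_def S_def image_image A_def[symmetric]
    using lin[OF that] by (intro arg_cong[where f=Inf] image_cong) auto
  have UV: "Umin lo hi D P \<eta> x t i a = Vmin lo hi D P \<eta> x t i a a" for i a
    unfolding Umin_def Vmin_def ..
  have Xnn: "Xmin lo hi D P \<eta> x i a \<ge> 0" if "i \<in> {1,2}" "a \<in> {lo..hi}" for i a
    unfolding XS using Ssub[OF that] Sne by (intro cInf_greatest) auto
  have mono: "mono_on {lo..hi} (Xmin lo hi D P \<eta> x i)" if "i \<in> {1,2}" for i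
    using assms(8) that unfolding assumption_X_def by auto
  have Xint: "Xmin lo hi D P \<eta> x i integrable_on {a..b}" if "i \<in> {1,2}" "{a..b} \<subseteq> {lo..hi}" for i a b
    using integrable_subinterval_real[OF integrable_on_mono_on[OF mono[OF that(1)]] that(2)] .
  have IR: "individually_rational lo hi D P \<eta> x t"
    unfolding individually_rational_def
  proof (intro ballI)
    fix i :: nat and th assume i: "i \<in> {1,2}" and th: "th \<in> {lo..hi}"
    have "0 \<le> integral {lo..th} (Xmin lo hi D P \<eta> x i)"
      using Xint[OF i, of lo th] th Xnn[OF i] by (intro integral_nonneg) auto
    thus "0 \<le> Umin lo hi D P \<eta> x t i th" using assms(11) i th by auto
  qed
  have IC: "incentive_compatible lo hi D P \<eta> x t"
    unfolding incentive_compatible_def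
  proof (intro ballI)
    fix i :: nat and th a assume i: "i \<in> {1,2}" and th: "th \<in> {lo..hi}" and a: "a \<in> {lo..hi}"
    define Xm where "Xm = Xmin lo hi D P \<eta> x i"
    have c0: "a - tw i a + tl i a \<ge> 0" using wl[OF i a a] by linarith
    have "Vmin lo hi D P \<eta> x t i th a \<le> (th - tw i a + tl i a) * Xm a + (- tl i a)"
      unfolding VS[OF i a] Xm_def XS by (rule inf_affine(1)[OF Sne Ssub[OF i a]])
    also have "\<dots> = (th - a) * Xm a + ((a - tw i a + tl i a) * Xm a + (- tl i a))"
      by (simp add: algebra_simps)
    also have "(a - tw i a + tl i a) * Xm a + (- tl i a) = Umin lo hi D P \<eta> x t i a"
      unfolding UV VS[OF i a] Xm_def XS by (rule inf_affine(2)[OF Sne Ssub[OF i a] c0, symmetric])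
    also have "\<dots> = integral {lo..a} Xm" using assms(11) i a Xm_def by auto
    also have "(th - a) * Xm a + integral {lo..a} Xm \<le> integral {lo..th} Xm"
    proof (cases "a \<le> th")
      case True
      have "integral {a..th} (\<lambda>_. Xm a) \<le> integral {a..th} Xm"
        using Xint[OF i, of a th] a th mono[OF i] unfolding Xm_def
        by (intro integral_le) (auto simp: mono_on_def)
      moreover have "integral {lo..a} Xm + integral {a..th} Xm = integral {lo..th} Xm"
        unfolding Xm_def using a th True by (intro Henstock_Kurzweil_Integration.integral_combine Xint[OF i]) auto
      ultimately show ?thesis using True by simp
    next
      case False
      have "integral {th..a} Xm \<le> integral {th..a} (\<lambda>_. Xm a)"
        using Xint[OF i, of th a] a th mono[OF i] unfolding Xm_def
        by (intro integral_le) (auto simp: mono_on_def)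
      moreover have "integral {lo..th} Xm + integral {th..a} Xm = integral {lo..a} Xm"
        unfolding Xm_def using a th False by (intro Henstock_Kurzweil_Integration.integral_combine Xint[OF i]) auto
      ultimately show ?thesis using False by (simp add: algebra_simps)
    qed
    also have "integral {lo..th} Xm = Vmin lo hi D P \<eta> x t i th th"
      using assms(11) i th Xm_def UV by auto
    finally show "Vmin lo hi D P \<eta> x t i th a \<le> Vmin lo hi D P \<eta> x t i th th" by simp
  qed
  show ?thesis unfolding feasible_def using IC IR by simp
qed

end
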